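(* Let $\mathrm r\in\mathbb{Z}_+^d$ with $\mathrm r>0$, let $x\in S_d^{\mathrm r}$ with finite length, and let $\bar x$ be the associated sequence (which lies in $\bar S_d^{\mathrm r}$). Then the number of good cyclical permutations of $x$ (with respect to $\mathrm r$) equals the number of good cyclical permutations of $\bar x$ (with respect to $\mathrm r$).
   Context: $d\ge2$, $[d]=\{1,\dots,d\}$, $\mathbb N=\{1,2,\dots\}$, $1_d=(1,\dots,1)$. $S_d$: families $x=(x^{(1)},\dots,x^{(d)})$, $x^{(i)}=(x^{i,1},\dots,x^{i,d})$ a $\mathbb{Z}^d$-valued sequence indexed by $\{0,\dots,n_i\}$, $x^{(i)}_0=0$, $x^{i,j}$ nondecreasing for $i\ne j$, $x^{i,i}_{n+1}-x^{i,i}_n\ge-1$; $(n_1,\dots,n_d)$ is its length; $x^{i,j}(n)=x^{i,j}_n$. A solution of $(\mathrm r,x)$ is $\mathrm s\in\mathbb{Z}_+^d$, $\mathrm s\le$ length, with $r_j+\sum_ix^{i,j}(s_i)=0$ for all $j$; the smallest solution is a solution that is coordinatewise $\le$ every solution. $S_d^{\mathrm r}$: $x\in S_d$ whose length lies in $\mathbb{N}^d$ and is the smallest solution of $(\mathrm r,x)$; $\bar S_d^{\mathrm r}$: those $x\in S_d^{\mathrm r}$ with $x^{i,i}_k=-k$ for all $k,i$. For $x\in S_d$ set $k_i=-\min_{0\le n\le n_i}x^{i,i}_n$, $\tau^{(i)}_k=\min\{n\ge0:x^{i,i}_n=-k\}$ ($0\le k\le k_i$) and $\bar x^{i,j}_k=x^{i,j}(\tau^{(i)}_k)$,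 $0\le k\le k_i$. Cyclical permutations: for $g$ on $\{0,\dots,m\}$ with $g(0)=0$, $1\le n\le m$, $0\le q\le n-1$: $g_{q,n}(h)=g(q+h)-g(q)$ for $0\le h\le n-q$, $g_{q,n}(h)=g(h-(n-q))+g(n)-g(q)$ for $n-q\le h\le n$, $g_{q,n}(h)=g(h)$ for $h\ge n$; for $y\in S_d$ of length $\mathrm m\in\mathbb N^d$ and $\mathrm q\le\mathrm m-1_d$, $y_{\mathrm q,\mathrm m}=(y^{(1)}_{q_1,m_1},\dots,y^{(d)}_{q_d,m_d})$. If $\mathrm m$ is a solution of $(\mathrm r,y)$, $y_{\mathrm q,\mathrm m}$ is a good cyclical permutation of $y$ (with respect to $\mathrm r$) if $\mathrm m$ is the smallest solution of $(\mathrm r,y_{\mathrm q,\mathrm m})$; the number of good cyclical permutations is the number of such $\mathrm q$. *)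

theory Defs
  imports Main "HOL-Library.FuncSet"
begin

text \<open>A family x = (x^(1),...,x^(d)) is encoded as x i j n = x^{i,j}_n
  (i, j in {1..d}); its length is len :: nat => nat (len i = n_i).
  Values outside the relevant index ranges are irrelevant.\<close>

definition in_S :: "nat \<Rightarrow> (nat \<Rightarrow> nat \<Rightarrow> nat \<Rightarrow> int) \<Rightarrow> (nat \<Rightarrow> nat) \<Rightarrow> bool" where
  "in_S d x len \<longleftrightarrow>
     (\<forall>i\<in>{1..d}. \<forall>j\<in>{1..d}. x i j 0 = 0) \<and>
     (\<forall>i\<in>{1..d}. \<forall>j\<in>{1..d}. i \<noteq> j \<longrightarrow> (\<forall>n<len i. x i j n \<le> x i j (Suc n))) \<and>
     (\<forall>i\<in>{1..d}. \<forall>n<len i. x i i (Suc n) - x i i n \<ge> -1)"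

definition is_solution :: "nat \<Rightarrow> (nat \<Rightarrow> nat) \<Rightarrow> (nat \<Rightarrow> nat \<Rightarrow> nat \<Rightarrow> int) \<Rightarrow> (nat \<Rightarrow> nat)
    \<Rightarrow> (nat \<Rightarrow> nat) \<Rightarrow> bool" where
  "is_solution d r x len s \<longleftrightarrow>
     (\<forall>i\<in>{1..d}. s i \<le> len i) \<and>
     (\<forall>j\<in>{1..d}. int (r j) + (\<Sum>i\<in>{1..d}. x i j (s i)) = 0)"

definition is_smallest_solution :: "nat \<Rightarrow> (nat \<Rightarrow> nat) \<Rightarrow> (nat \<Rightarrow> nat \<Rightarrow> nat \<Rightarrow> int)
    \<Rightarrow> (nat \<Rightarrow> nat) \<Rightarrow> (nat \<Rightarrow> nat) \<Rightarrow> bool" where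
  "is_smallest_solution d r x len s \<longleftrightarrow>
     is_solution d r x len s \<and>
     (\<forall>s'. is_solution d r x len s' \<longrightarrow> (\<forall>i\<in>{1..d}. s i \<le> s' i))"

definition in_S_r :: "nat \<Rightarrow> (nat \<Rightarrow> nat) \<Rightarrow> (nat \<Rightarrow> nat \<Rightarrow> nat \<Rightarrow> int) \<Rightarrow> (nat \<Rightarrow> nat) \<Rightarrow> bool" where
  "in_S_r d r x len \<longleftrightarrow>
     in_S d x len \<and> (\<forall>i\<in>{1..d}. 1 \<le> len i) \<and> is_smallest_solution d r x len len"

definition bar_len :: "(nat \<Rightarrow> nat \<Rightarrow> nat \<Rightarrow> int) \<Rightarrow> (nat \<Rightarrow> nat) \<Rightarrow> nat \<Rightarrow> nat" where
  "bar_len x len i = nat (- Min ((\<lambda>n. x i i n) ` {0..len i}))"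

definition tau :: "(nat \<Rightarrow> nat \<Rightarrow> nat \<Rightarrow> int) \<Rightarrow> nat \<Rightarrow> nat \<Rightarrow> nat" where
  "tau x i k = (LEAST n. x i i n = - int k)"

definition bar_seq :: "(nat \<Rightarrow> nat \<Rightarrow> nat \<Rightarrow> int) \<Rightarrow> nat \<Rightarrow> nat \<Rightarrow> nat \<Rightarrow> int" where
  "bar_seq x i j k = x i j (tau x i k)"

definition cyc :: "(nat \<Rightarrow> int) \<Rightarrow> nat \<Rightarrow> nat \<Rightarrow> nat \<Rightarrow> int" where
  "cyc g q n h =
     (if h \<le> n - q then g (q + h) - g q
      else if h \<le> n then g (h - (n - q)) + g n - g q
      else g h)"

definition cyc_perm :: "(nat \<Rightarrow> nat \<Rightarrow> nat \<Rightarrow> int) \<Rightarrow> (nat \<Rightarrow> nat) \<Rightarrow> (nat \<Rightarrow> nat)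
    \<Rightarrow> nat \<Rightarrow> nat \<Rightarrow> nat \<Rightarrow> int" where
  "cyc_perm y q m i j = cyc (y i j) (q i) (m i)"

definition num_good :: "nat \<Rightarrow> (nat \<Rightarrow> nat) \<Rightarrow> (nat \<Rightarrow> nat \<Rightarrow> nat \<Rightarrow> int) \<Rightarrow> (nat \<Rightarrow> nat) \<Rightarrow> nat" where
  "num_good d r y m =
     card {q \<in> Pi\<^sub>E {1..d} (\<lambda>i. {0..<m i}).
             is_smallest_solution d r (cyc_perm y q m) m m}"

end

theory Submission
  imports Defs
begin


lemma mono_steps:
  fixes g :: "nat \<Rightarrow> int"
  assumes "\<forall>a<n. g a \<le> g (Suc a)" "a \<le> b" "b \<le> n"
  shows "g a \<le> g b"
  using assms(2,3)
proof (induction b)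
  case 0 then show ?case by simp
next
  case (Suc b)
  show ?case
  proof (cases "a = Suc b")
    case True then show ?thesis by simp
  next
    case False
    then have "a \<le> b" using Suc by simp
    then have "g a \<le> g b" using Suc by simp
    also have "g b \<le> g (Suc b)" using assms(1) Suc by simp
    finally show ?thesis .
  qed
qed

lemma diag_lower:
  fixes g :: "nat \<Rightarrow> int"
  assumes "\<forall>a<n. g (Suc a) - g a \<ge> -1" "a \<le> b" "b \<le> n"
  shows "g b \<ge> g a - int (b - a)"
  using assms(2,3)
proof (induction b)
  case 0 then show ?case by simp
next
  case (Suc b)
  show ?case
  proof (cases "a = Suc b")
    case True then show ?thesis by simp
  next
    case False
    then have "a \<le> b" using Suc by simp
    then have "g b \<ge> g a - int (b - a)" using Suc by simp
    moreover have "g (Suc b) - g b \<ge> -1" using assms(1) Suc by simp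
    ultimately show ?thesis using \<open>a \<le> b\<close> by (simp add: Suc_diff_le)
  qed
qed

lemma ivt:
  fixes g :: "nat \<Rightarrow> int"
  assumes "\<forall>a<n. g (Suc a) - g a \<ge> -1" "g 0 \<ge> v" "g h \<le> v" "h \<le> n"
  shows "\<exists>h'\<le>h. g h' = v"
  using assms(3,4)
proof (induction h)
  case 0 then show ?case using assms(2) by auto
next
  case (Suc h)
  show ?case
  proof (cases "g h \<le> v")
    case True then show ?thesis using Suc by (metis le_SucI Suc_leD)
  next
    case False
    have "g (Suc h) - g h \<ge> -1" using assms(1) Suc by simp
    then have "g (Suc h) = v" using False Suc by linarith
    then show ?thesis by auto
  qed
qed

lemma sum_upd:
  assumes "finite A" "i \<in> A"
  shows "(\<Sum>a\<in>A. F a ((s(i:=v)) a)) = (\<Sum>a\<in>A. F a (s a)) - F i (s i) + (F i v :: int)"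
proof -
  have "(\<Sum>a\<in>A. F a ((s(i:=v)) a)) = F i v + (\<Sum>a\<in>A-{i}. F a ((s(i:=v)) a))"
    using assms by (simp add: sum.remove)
  also have "(\<Sum>a\<in>A-{i}. F a ((s(i:=v)) a)) = (\<Sum>a\<in>A-{i}. F a (s a))"
    by (rule sum.cong) auto
  also have "(\<Sum>a\<in>A. F a (s a)) = F i (s i) + (\<Sum>a\<in>A-{i}. F a (s a))"
    using assms by (simp add: sum.remove)
  ultimately show ?thesis by simp
qed

lemma S_mono:
  assumes "in_S d z m" "i \<in> {1..d}" "j \<in> {1..d}" "i \<noteq> j" "a \<le> b" "b \<le> m i"
  shows "z i j a \<le> z i j b"
  using assms mono_steps[of "m i" "z i j" a b] unfolding in_S_def by blast

lemma S_diag: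
  assumes "in_S d z m" "i \<in> {1..d}"
  shows "\<forall>a<m i. z i i (Suc a) - z i i a \<ge> -1" "z i i 0 = 0"
  using assms unfolding in_S_def by auto

lemma greedy_aux:
  assumes S: "in_S d z m" and tm: "\<forall>i\<in>{1..d}. t i \<le> m i"
   and tv: "\<forall>j\<in>{1..d}. int (r j) + (\<Sum>i\<in>{1..d}. z i j (t i)) \<le> 0"
  shows "\<forall>s. (\<Sum>i\<in>{1..d}. t i - s i) = N \<longrightarrow> (\<forall>i\<in>{1..d}. s i \<le> t i) \<longrightarrow>
     (\<forall>j\<in>{1..d}. 0 \<le> int (r j) + (\<Sum>i\<in>{1..d}. z i j (s i))) \<longrightarrow>
     (\<exists>s'. is_solution d r z m s' \<and> (\<forall>i\<in>{1..d}. s' i \<le> t i))"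
proof (induction N rule: less_induct)
  case (less N)
  show ?case
  proof (intro allI impI)
    fix s
    assume N: "(\<Sum>i\<in>{1..d}. t i - s i) = N" and st: "\<forall>i\<in>{1..d}. s i \<le> t i"
      and sv: "\<forall>j\<in>{1..d}. 0 \<le> int (r j) + (\<Sum>i\<in>{1..d}. z i j (s i))"
    show "\<exists>s'. is_solution d r z m s' \<and> (\<forall>i\<in>{1..d}. s' i \<le> t i)"
    proof (cases "\<forall>j\<in>{1..d}. int (r j) + (\<Sum>i\<in>{1..d}. z i j (s i)) = 0")
      case True
      then show ?thesis using st tm unfolding is_solution_def by (meson order_trans)
    next
      case False
      then obtain j where j: "j \<in> {1..d}" and pos: "int (r j) + (\<Sum>i\<in>{1..d}. z i j (s i)) > 0"
        using sv by force
      have sj: "s j < t j"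
      proof (rule ccontr)
        assume "\<not> s j < t j"
        then have eq: "s j = t j" using st j by force
        have "(\<Sum>i\<in>{1..d}. z i j (s i)) \<le> (\<Sum>i\<in>{1..d}. z i j (t i))"
        proof (rule sum_mono)
          fix i assume i: "i \<in> {1..d}"
          show "z i j (s i) \<le> z i j (t i)"
          proof (cases "i = j")
            case True then show ?thesis using eq by simp
          next
            case False then show ?thesis using S_mono[OF S i j False] st tm i by blast
          qed
        qed
        then show False using pos tv j by force
      qed
      define s' where "s' = s(j := Suc (s j))"
      have sums: "(\<Sum>i\<in>{1..d}. z i j' (s' i)) = (\<Sum>i\<in>{1..d}. z i j' (s i)) - z j j' (s j) + z j j' (Suc (s j))" for j'
        unfolding s'_def using sum_upd[of "{1..d}" j "\<lambda>i v. z i j' v" s "Suc (s j)"] j by simp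
      have s't: "\<forall>i\<in>{1..d}. s' i \<le> t i" using st sj unfolding s'_def by auto
      have N': "(\<Sum>i\<in>{1..d}. t i - s' i) < N"
      proof -
        have "(\<Sum>i\<in>{1..d}. t i - s' i) < (\<Sum>i\<in>{1..d}. t i - s i)"
        proof (rule sum_strict_mono_ex1)
          show "finite {1..d}" by simp
          show "\<forall>x\<in>{1..d}. t x - s' x \<le> t x - s x" unfolding s'_def by auto
          show "\<exists>a\<in>{1..d}. t a - s' a < t a - s a" using j sj unfolding s'_def by auto
        qed
        then show ?thesis using N by simp
      qed
      have s'v: "\<forall>j'\<in>{1..d}. 0 \<le> int (r j') + (\<Sum>i\<in>{1..d}. z i j' (s' i))"
      proof
        fix j' assume j': "j' \<in> {1..d}"
        show "0 \<le> int (r j') + (\<Sum>i\<in>{1..d}. z i j' (s' i))"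
        proof (cases "j' = j")
          case True
          have "z j j (Suc (s j)) - z j j (s j) \<ge> -1"
            using S_diag(1)[OF S j] sj tm j by fastforce
          then show ?thesis using pos sums[of j'] True by simp
        next
          case False
          have "z j j' (s j) \<le> z j j' (Suc (s j))"
            using S_mono[OF S j j' ] False sj tm j by fastforce
          then show ?thesis using sv j' sums[of j'] by force
        qed
      qed
      show ?thesis using less.IH[OF N'] s't s'v by blast
    qed
  qed
qed

lemma greedy:
  assumes S: "in_S d z m" and tm: "\<forall>i\<in>{1..d}. t i \<le> m i"
   and tv: "\<forall>j\<in>{1..d}. int (r j) + (\<Sum>i\<in>{1..d}. z i j (t i)) \<le> 0"
  shows "\<exists>s. is_solution d r z m s \<and> (\<forall>i\<in>{1..d}. s i \<le> t i)"
proof -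
  have z0: "\<forall>j\<in>{1..d}. 0 \<le> int (r j) + (\<Sum>i\<in>{1..d}. z i j ((\<lambda>_. 0) i))"
    using S unfolding in_S_def by simp
  have "\<forall>i\<in>{1..d}. (\<lambda>_. 0::nat) i \<le> t i" by simp
  then show ?thesis using greedy_aux[OF S tm tv, of "\<Sum>i\<in>{1..d}. t i - 0", rule_format, of "\<lambda>_. 0"] z0 by simp
qed

lemma smallest_diag:
  assumes S: "in_S d z m" and sm: "is_smallest_solution d r z m m" and i: "i \<in> {1..d}" and h: "h < m i"
  shows "z i i h > z i i (m i)"
proof (rule ccontr)
  assume "\<not> ?thesis"
  then have le: "z i i h \<le> z i i (m i)" by simp
  define t where "t = m(i := h)"
  have sol: "is_solution d r z m m" using sm unfolding is_smallest_solution_def by simp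
  have tm: "\<forall>i'\<in>{1..d}. t i' \<le> m i'" unfolding t_def using h by auto
  have tv: "\<forall>j\<in>{1..d}. int (r j) + (\<Sum>i'\<in>{1..d}. z i' j (t i')) \<le> 0"
  proof
    fix j assume j: "j \<in> {1..d}"
    have e: "(\<Sum>i'\<in>{1..d}. z i' j (t i')) = (\<Sum>i'\<in>{1..d}. z i' j (m i')) - z i j (m i) + z i j h"
      unfolding t_def using sum_upd[of "{1..d}" i "\<lambda>i v. z i j v" m h] i by simp
    have "z i j h \<le> z i j (m i)"
    proof (cases "i = j")
      case True then show ?thesis using le by simp
    next
      case False then show ?thesis using S_mono[OF S i j False] h by simp
    qed
    then show "int (r j) + (\<Sum>i'\<in>{1..d}. z i' j (t i')) \<le> 0"
      using sol j e unfolding is_solution_def by force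
  qed
  obtain s where s: "is_solution d r z m s" "\<forall>i\<in>{1..d}. s i \<le> t i"
    using greedy[OF S tm tv] by blast
  have "m i \<le> s i" using sm s(1) i unfolding is_smallest_solution_def by blast
  moreover have "s i \<le> h" using s(2) i unfolding t_def by force
  ultimately show False using h by simp
qed

lemma cyc_step:
  fixes g :: "nat \<Rightarrow> int"
  assumes g0: "g 0 = 0" and q: "q \<le> n" and st: "\<forall>a<n. g (Suc a) - g a \<ge> c" and h: "h < n"
  shows "cyc g q n (Suc h) - cyc g q n h \<ge> c"
proof -
  consider "Suc h \<le> n - q" | "h = n - q" | "n - q < h" by linarith
  then show ?thesis
  proof cases
    case 1
    then show ?thesis unfolding cyc_def using st h by (simp add: add.commute)
  next
    case 2
    then have "q > 0" using h by simp
    then have "cyc g q n (Suc h) = g 1 + g n - g q" unfolding cyc_def using 2 h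
      by (simp add: Suc_diff_le)
    moreover have "cyc g q n h = g n - g q" unfolding cyc_def using 2 q by simp
    moreover have "g 1 - g 0 \<ge> c" using st h by force
    ultimately show ?thesis using g0 by simp
  next
    case 3
    then have a: "Suc h - (n - q) = Suc (h - (n - q))" by (simp add: Suc_diff_le)
    have "h - (n - q) < n" using h by simp
    then have "g (Suc (h - (n - q))) - g (h - (n - q)) \<ge> c" using st by blast
    then show ?thesis unfolding cyc_def using 3 h a by simp
  qed
qed

lemma cyc_zero: "cyc g q n 0 = g q - g q" unfolding cyc_def by simp

lemma cyc_end:
  assumes "g 0 = 0" "q \<le> n"
  shows "cyc g q n n = g n"
proof (cases "q = 0")
  case True then show ?thesis using assms unfolding cyc_def by simp
next
  case False
  then have "\<not> n \<le> n - q" using assms by simp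
  then show ?thesis using assms unfolding cyc_def by simp
qed

lemma cyc_S:
  assumes S: "in_S d x len" and q: "\<forall>i\<in>{1..d}. q i \<le> len i"
  shows "in_S d (cyc_perm x q len) len"
  unfolding in_S_def cyc_perm_def
proof (intro conjI ballI allI impI)
  fix i j assume "i \<in> {1..d}" "j \<in> {1..d}"
  show "cyc (x i j) (q i) (len i) 0 = 0" by (simp add: cyc_zero)
next
  fix i j n assume i: "i \<in> {1..d}" and j: "j \<in> {1..d}" and ij: "i \<noteq> j" and n: "n < len i"
  have "\<forall>a<len i. x i j (Suc a) - x i j a \<ge> 0" using S i j ij unfolding in_S_def by force
  then have "cyc (x i j) (q i) (len i) (Suc n) - cyc (x i j) (q i) (len i) n \<ge> 0"
    using cyc_step[of "x i j" "q i" "len i" 0 n] S i j q n unfolding in_S_def by blast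
  then show "cyc (x i j) (q i) (len i) n \<le> cyc (x i j) (q i) (len i) (Suc n)" by simp
next
  fix i n assume i: "i \<in> {1..d}" and n: "n < len i"
  show "cyc (x i i) (q i) (len i) (Suc n) - cyc (x i i) (q i) (len i) n \<ge> -1"
    using cyc_step[of "x i i" "q i" "len i" "-1" n] S i q n unfolding in_S_def by blast
qed

lemma cyc_solution:
  assumes S: "in_S d x len" and q: "\<forall>i\<in>{1..d}. q i \<le> len i" and sol: "is_solution d r x len len"
  shows "is_solution d r (cyc_perm x q len) len len"
proof -
  have "\<And>i j. i \<in> {1..d} \<Longrightarrow> j \<in> {1..d} \<Longrightarrow> cyc_perm x q len i j (len i) = x i j (len i)"
    unfolding cyc_perm_def using cyc_end S q unfolding in_S_def by blast
  then show ?thesis using sol unfolding is_solution_def by simp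
qed

locale walk =
  fixes f :: "nat \<Rightarrow> int" and N :: nat
  assumes f0: "f 0 = 0" and stp: "\<forall>a<N. f (Suc a) - f a \<ge> -1"
    and fmin: "\<forall>h<N. f h > f N"
begin

definition K where "K = nat (- f N)"
definition tw where "tw k = (LEAST n. f n = - int k)"

lemma fN: "f N = - int K"
proof (cases "N = 0")
  case True then show ?thesis using f0 unfolding K_def by simp
next
  case False then have "f 0 > f N" using fmin by simp
  then show ?thesis using f0 unfolding K_def by simp
qed

lemma lowb: "h \<le> N \<Longrightarrow> f h \<ge> - int K"
proof (cases "h = N")
  case True then show ?thesis using fN by simp
next
  case False
  assume "h \<le> N"
  then have "h < N" using False by simp
  then show ?thesis using fmin fN by fastforce
qed

lemma Min_eq: "Min (f ` {0..N}) = f N"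
proof (rule Min_eqI)
  show "finite (f ` {0..N})" by simp
  show "\<And>y. y \<in> f ` {0..N} \<Longrightarrow> f N \<le> y" using lowb fN by auto
  show "f N \<in> f ` {0..N}" by simp
qed

lemma tw_props:
  assumes k: "k \<le> K"
  shows "tw k \<le> N" "f (tw k) = - int k" "\<forall>h<tw k. f h > - int k"
proof -
  obtain h where h: "h \<le> N" "f h = - int k"
    using ivt[OF stp, of "- int k" N] f0 fN k by auto
  have "f (tw k) = - int k" unfolding tw_def by (rule LeastI[of _ h]) (rule h(2))
  moreover have "tw k \<le> h" unfolding tw_def by (rule Least_le) (rule h(2))
  moreover have "\<forall>h'<tw k. f h' > - int k"
  proof (intro allI impI, rule ccontr)
    fix h' assume h': "h' < tw k" "\<not> f h' > - int k"
    then obtain h'' where "h'' \<le> h'" "f h'' = - int k"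
      using ivt[OF stp, of "- int k" h'] f0 \<open>tw k \<le> h\<close> h(1) by force
    then have "tw k \<le> h''" unfolding tw_def by (simp add: Least_le)
    then show False using h' \<open>h'' \<le> h'\<close> by simp
  qed
  ultimately show "tw k \<le> N" "f (tw k) = - int k" "\<forall>h<tw k. f h > - int k" using h by auto
qed

lemma tw_hit:
  assumes "f h = - int k" "\<forall>h'<h. f h' > f h"
  shows "tw k = h"
  unfolding tw_def
proof (rule Least_equality)
  show "f h = - int k" by fact
  fix y assume y: "f y = - int k"
  show "h \<le> y"
  proof (rule ccontr)
    assume "\<not> h \<le> y"
    then have "f y > f h" using assms(2) by simp
    then show False using y assms(1) by simp
  qed
qed

lemma tw_K: "tw K = N"
  using tw_hit[of N K] fN fmin by simp

lemma tw_0: "tw 0 = 0"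
  using tw_hit[of 0 0] f0 by simp

lemma tw_mono:
  assumes "k < k'" "k' \<le> K"
  shows "tw k < tw k'"
proof -
  have "tw k \<le> tw k'"
  proof -
    obtain h where "h \<le> tw k'" "f h = - int k"
      using ivt[OF stp, of "- int k" "tw k'"] f0 tw_props[of k'] assms by force
    then show ?thesis unfolding tw_def by (meson Least_le order_trans)
  qed
  moreover have "tw k \<noteq> tw k'" using tw_props[of k] tw_props[of k'] assms by force
  ultimately show ?thesis by simp
qed

lemma tw_mono_le: "k \<le> k' \<Longrightarrow> k' \<le> K \<Longrightarrow> tw k \<le> tw k'"
proof (cases "k = k'")
  case True then show ?thesis by simp
next
  case False
  assume "k \<le> k'" "k' \<le> K"
  then show ?thesis using tw_mono[of k k'] False by simp
qed

end


locale walk_shift = walk +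
  fixes p :: nat
  assumes pK: "p < K"
begin

definition q where "q = tw p"
definition T where "T k' = (if k' \<le> K - p then tw (p + k') - q else N - q + tw (k' - (K - p)))"

lemma q_lt: "q < N" using tw_mono[of p K] pK tw_K unfolding q_def by simp
lemma fq: "f q = - int p" using tw_props(2)[of p] pK unfolding q_def by simp

lemma T_0: "T 0 = 0" unfolding T_def q_def by simp

lemma T_le: assumes "k' \<le> K" shows "T k' \<le> N"
proof (cases "k' \<le> K - p")
  case True
  then have "tw (p + k') \<le> N" using tw_props(1) pK by simp
  then show ?thesis unfolding T_def using True by simp
next
  case False
  then have "tw (k' - (K - p)) \<le> q" unfolding q_def using tw_mono_le pK assms by simp
  then show ?thesis unfolding T_def using False q_lt by simp
qed

lemma T_K: "T K = N"
proof (cases "p = 0")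
  case True then show ?thesis unfolding T_def q_def using tw_K tw_0 by simp
next
  case False
  then have "\<not> K \<le> K - p" using pK by simp
  moreover have "K - (K - p) = p" using pK by simp
  ultimately show ?thesis unfolding T_def q_def using q_lt q_def by simp
qed

lemma T_lt: assumes "k' < K" shows "T k' < N"
proof (cases "k' \<le> K - p")
  case True
  have a: "tw (p + k') \<le> N" using tw_props(1) pK True by simp
  show ?thesis
  proof (cases "p = 0")
    case p0: True
    then have "tw (p + k') < tw K" using tw_mono assms by simp
    then show ?thesis unfolding T_def using True tw_K by simp
  next
    case False
    then have "tw 0 < tw p" using tw_mono pK by simp
    then have "0 < q" using tw_0 q_def by simp
    then show ?thesis unfolding T_def using True a q_lt by simp
  qed
next
  case False
  then have "tw (k' - (K - p)) < q" unfolding q_def using tw_mono pK assms by simp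
  then show ?thesis unfolding T_def using False q_lt by simp
qed

lemma cyc_T:
  assumes k: "k' \<le> K"
  shows "cyc g q N (T k') = cyc (\<lambda>k. g (tw k)) p K k'"
proof (cases "k' \<le> K - p")
  case True
  have a: "tw (p + k') \<le> N" using tw_props(1) pK True by simp
  have b: "q \<le> tw (p + k')" unfolding q_def using tw_mono_le True pK by simp
  have "T k' = tw (p + k') - q" unfolding T_def using True by simp
  moreover have "tw (p + k') - q \<le> N - q" using a by simp
  ultimately show ?thesis unfolding cyc_def using True b q_def by simp
next
  case False
  define a where "a = k' - (K - p)"
  have a1: "0 < a" "a \<le> p" using False k pK unfolding a_def by auto
  have "tw 0 < tw a" using tw_mono[of 0 a] a1 pK by simp
  then have ta: "0 < tw a" using tw_0 by simp
  have tq: "tw a \<le> q" unfolding q_def using tw_mono_le a1 pK by simp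
  have T: "T k' = N - q + tw a" unfolding T_def a_def using False by simp
  have e1: "N - q + tw a \<le> N" "\<not> N - q + tw a \<le> N - q" "N - q + tw a - (N - q) = tw a"
    using ta tq q_lt by auto
  have "cyc g q N (T k') = g (tw a) + g N - g q"
    unfolding cyc_def T using e1 by simp
  moreover have "cyc (\<lambda>k. g (tw k)) p K k' = g (tw a) + g (tw K) - g (tw p)"
    unfolding cyc_def a_def using False k by simp
  ultimately show ?thesis using tw_K q_def by simp
qed

lemma cyc_diag_bar:
  assumes k: "k' \<le> K"
  shows "cyc (\<lambda>k. f (tw k)) p K k' = - int k'"
proof (cases "k' \<le> K - p")
  case True
  then show ?thesis unfolding cyc_def using tw_props(2) pK by simp
next
  case False
  then show ?thesis unfolding cyc_def using tw_props(2) pK k by simp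
qed

lemma T_val: "k' \<le> K \<Longrightarrow> cyc f q N (T k') = - int k'"
  using cyc_T cyc_diag_bar by simp

lemma cyc_lowb:
  assumes h: "h \<le> N" shows "cyc f q N h \<ge> - int K"
proof (cases "h \<le> N - q")
  case True
  then have "f (q + h) \<ge> - int K" using lowb[of "q+h"] q_lt by simp
  then show ?thesis unfolding cyc_def using True fq by simp
next
  case False
  define h' where "h' = h - (N - q)"
  have "h' \<le> q" unfolding h'_def using h q_lt by simp
  have "f h' \<ge> - int p"
  proof (cases "h' = q")
    case True then show ?thesis using fq by simp
  next
    case False
    then have "h' < tw p" using \<open>h' \<le> q\<close> q_def by simp
    then show ?thesis using tw_props(3)[of p] pK by fastforce
  qed
  then show ?thesis unfolding cyc_def h'_def using False h fq fN by simp
qed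

lemma T_first:
  assumes k: "k' \<le> K" and h: "h < T k'"
  shows "cyc f q N h > - int k'"
proof (cases "k' \<le> K - p")
  case True
  then have hq: "q + h < tw (p + k')" using h unfolding T_def by simp
  have "tw (p + k') \<le> N" using tw_props(1) pK True by simp
  then have hl: "h \<le> N - q" using hq by simp
  have "f (q + h) > - int (p + k')" using tw_props(3)[of "p + k'"] hq pK True by simp
  then show ?thesis unfolding cyc_def using hl fq by simp
next
  case False
  define a where "a = k' - (K - p)"
  have a1: "0 < a" "a \<le> p" using False k pK unfolding a_def by auto
  have T: "T k' = N - q + tw a" unfolding T_def a_def using False by simp
  have tq: "tw a \<le> q" unfolding q_def using tw_mono_le a1 pK by simp
  show ?thesis
  proof (cases "h \<le> N - q")
    case True
    then have "f (q + h) \<ge> - int K" using lowb[of "q+h"] q_lt by simp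
    then show ?thesis unfolding cyc_def using True fq False by simp
  next
    case hF: False
    define h' where "h' = h - (N - q)"
    have "h' < tw a" unfolding h'_def using h T hF by simp
    then have "f h' > - int a" using tw_props(3)[of a] a1 pK by simp
    moreover have "h \<le> N" using h T tq q_lt by simp
    ultimately show ?thesis unfolding cyc_def h'_def a_def using hF fq fN False k by simp
  qed
qed

lemma F3:
  assumes h: "h \<le> N"
  shows "\<exists>k'\<le>K. T k' \<le> h \<and> cyc f q N h \<ge> - int k'"
proof -
  define A where "A = {k'\<in>{0..K}. T k' \<le> h}"
  have fin: "finite A" unfolding A_def by simp
  have ne: "0 \<in> A" unfolding A_def using T_0 by simp
  define k' where "k' = Max A"
  have kA: "k' \<in> A" unfolding k'_def using fin ne Max_in by blast
  then have kK: "k' \<le> K" and Tk: "T k' \<le> h" unfolding A_def by auto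
  show ?thesis
  proof (cases "k' = K")
    case True then show ?thesis using kK Tk cyc_lowb h by auto
  next
    case False
    then have "Suc k' \<le> K" using kK by simp
    moreover have "Suc k' \<notin> A" unfolding k'_def using fin ne
      by (metis Max_ge Suc_n_not_le_n)
    ultimately have "h < T (Suc k')" unfolding A_def by auto
    then have "cyc f q N h > - int (Suc k')" using T_first \<open>Suc k' \<le> K\<close> by blast
    then show ?thesis using kK Tk by (intro exI[of _ k']) simp
  qed
qed

end



locale lctx =
  fixes d :: nat and r :: "nat \<Rightarrow> nat" and x :: "nat \<Rightarrow> nat \<Rightarrow> nat \<Rightarrow> int" and n :: "nat \<Rightarrow> nat"
  assumes Sr: "in_S_r d r x n"
begin

lemma S: "in_S d x n" using Sr unfolding in_S_r_def by simp
lemma sm: "is_smallest_solution d r x n n" using Sr unfolding in_S_r_def by simp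
lemma sol: "is_solution d r x n n" using sm unfolding is_smallest_solution_def by simp

lemma W: assumes i: "i \<in> {1..d}" shows "walk (x i i) (n i)"
  using S_diag[OF S i] smallest_diag[OF S sm i] by unfold_locales auto

lemma Kdef: assumes i: "i \<in> {1..d}" shows "bar_len x n i = walk.K (x i i) (n i)"
proof -
  interpret walk "x i i" "n i" by (rule W[OF i])
  show ?thesis unfolding bar_len_def K_def using Min_eq by simp
qed

lemma taudef: assumes i: "i \<in> {1..d}" shows "tau x i k = walk.tw (x i i) k"
proof -
  interpret walk "x i i" "n i" by (rule W[OF i])
  show ?thesis unfolding tau_def tw_def by simp
qed


lemma WS: assumes i: "i \<in> {1..d}" and p: "p < bar_len x n i" shows "walk_shift (x i i) (n i) p"
  using Kdef[OF i] W[OF i] p by (simp add: walk_shift_def walk_shift_axioms_def)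

lemma xb_eq: assumes i: "i \<in> {1..d}" shows "bar_seq x i j = (\<lambda>k. x i j (walk.tw (x i i) k))"
  by (rule ext) (simp add: bar_seq_def taudef[OF i])

lemma xb_S: "in_S d (bar_seq x) (bar_len x n)"
  unfolding in_S_def
proof (intro conjI ballI allI impI)
  fix i j assume i: "i \<in> {1..d}" and j: "j \<in> {1..d}"
  interpret walk "x i i" "n i" by (rule W[OF i])
  show "bar_seq x i j 0 = 0" using xb_eq[OF i] tw_0 S i j unfolding in_S_def by simp
next
  fix i j k assume i: "i \<in> {1..d}" and j: "j \<in> {1..d}" and ij: "i \<noteq> j" and k: "k < bar_len x n i"
  interpret walk "x i i" "n i" by (rule W[OF i])
  have kK: "Suc k \<le> K" using k Kdef[OF i] by simp
  have "tw k \<le> tw (Suc k)" using tw_mono_le kK by simp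
  moreover have "tw (Suc k) \<le> n i" using tw_props(1) kK by simp
  ultimately show "bar_seq x i j k \<le> bar_seq x i j (Suc k)"
    using xb_eq[OF i] S_mono[OF S i j ij] by simp
next
  fix i k assume i: "i \<in> {1..d}" and k: "k < bar_len x n i"
  interpret walk "x i i" "n i" by (rule W[OF i])
  have kK: "Suc k \<le> K" using k Kdef[OF i] by simp
  show "bar_seq x i i (Suc k) - bar_seq x i i k \<ge> -1"
    using xb_eq[OF i] tw_props(2)[of k] tw_props(2)[of "Suc k"] kK by simp
qed

lemma xb_sol: "is_solution d r (bar_seq x) (bar_len x n) (bar_len x n)"
proof -
  have "\<And>i j. i \<in> {1..d} \<Longrightarrow> bar_seq x i j (bar_len x n i) = x i j (n i)"
  proof -
    fix i j assume i: "i \<in> {1..d}"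
    interpret walk "x i i" "n i" by (rule W[OF i])
    show "bar_seq x i j (bar_len x n i) = x i j (n i)" using xb_eq[OF i] Kdef[OF i] tw_K by simp
  qed
  then show ?thesis using sol unfolding is_solution_def by simp
qed


lemma qi: assumes i: "i \<in> {1..d}" and p: "p < bar_len x n i"
  shows "tau x i p = walk_shift.q (x i i) p" "tau x i p < n i"
proof -
  interpret walk_shift "x i i" "n i" p by (rule WS[OF i p])
  show "tau x i p = q" using taudef[OF i] q_def by simp
  then show "tau x i p < n i" using q_lt by simp
qed

lemma D1:
  assumes p: "p \<in> Pi\<^sub>E {1..d} (\<lambda>i. {0..<bar_len x n i})"
    and good: "is_smallest_solution d r (cyc_perm (bar_seq x) p (bar_len x n)) (bar_len x n) (bar_len x n)"
  shows "is_smallest_solution d r (cyc_perm x (restrict (\<lambda>i. tau x i (p i)) {1..d}) n) n n"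
proof -
  define Q where "Q = restrict (\<lambda>i. tau x i (p i)) {1..d}"
  have pK: "\<forall>i\<in>{1..d}. p i < bar_len x n i" using p by auto
  have Qi: "\<forall>i\<in>{1..d}. Q i = walk_shift.q (x i i) (p i) \<and> Q i < n i"
    using qi pK unfolding Q_def by simp
  have Qle: "\<forall>i\<in>{1..d}. Q i \<le> n i" using Qi less_imp_le by blast
  have yS: "in_S d (cyc_perm x Q n) n" using cyc_S[OF S Qle] .
  have ysol: "is_solution d r (cyc_perm x Q n) n n" using cyc_solution[OF S Qle sol] .
  have zS: "in_S d (cyc_perm (bar_seq x) p (bar_len x n)) (bar_len x n)"
    using cyc_S[OF xb_S] pK less_imp_le by blast
  show ?thesis unfolding Q_def[symmetric] is_smallest_solution_def
  proof (intro conjI ysol allI impI ballI)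
    fix s i0 assume ss: "is_solution d r (cyc_perm x Q n) n s" and i0: "i0 \<in> {1..d}"
    have ex: "\<forall>i\<in>{1..d}. \<exists>k'. k' \<le> bar_len x n i \<and> walk_shift.T (x i i) (n i) (p i) k' \<le> s i
        \<and> cyc (x i i) (Q i) (n i) (s i) \<ge> - int k'"
    proof
      fix i assume i: "i \<in> {1..d}"
      interpret walk_shift "x i i" "n i" "p i" by (rule WS[OF i]) (use pK i in simp)
      have "s i \<le> n i" using ss i unfolding is_solution_def by simp
      then show "\<exists>k'. k' \<le> bar_len x n i \<and> T k' \<le> s i \<and> cyc (x i i) (Q i) (n i) (s i) \<ge> - int k'"
        using F3 Kdef[OF i] Qi i by simp
    qed
    then obtain t where t: "\<forall>i\<in>{1..d}. t i \<le> bar_len x n i \<and> walk_shift.T (x i i) (n i) (p i) (t i) \<le> s i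
        \<and> cyc (x i i) (Q i) (n i) (s i) \<ge> - int (t i)"
      by metis
    have tv: "\<forall>j\<in>{1..d}. int (r j) + (\<Sum>i\<in>{1..d}. cyc_perm (bar_seq x) p (bar_len x n) i j (t i)) \<le> 0"
    proof
      fix j assume j: "j \<in> {1..d}"
      have "(\<Sum>i\<in>{1..d}. cyc_perm (bar_seq x) p (bar_len x n) i j (t i)) \<le> (\<Sum>i\<in>{1..d}. cyc_perm x Q n i j (s i))"
      proof (rule sum_mono)
        fix i assume i: "i \<in> {1..d}"
        interpret walk_shift "x i i" "n i" "p i" by (rule WS[OF i]) (use pK i in simp)
        have ti0: "t i \<le> bar_len x n i \<and> T (t i) \<le> s i \<and> cyc (x i i) (Q i) (n i) (s i) \<ge> - int (t i)"
          using t i by blast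
        have ti: "t i \<le> K" "T (t i) \<le> s i" "cyc (x i i) q (n i) (s i) \<ge> - int (t i)"
          using ti0 Kdef[OF i] Qi i by auto
        have e: "cyc_perm (bar_seq x) p (bar_len x n) i j (t i) = cyc (x i j) q (n i) (T (t i))"
          unfolding cyc_perm_def using cyc_T[OF ti(1), of "x i j"] xb_eq[OF i] Kdef[OF i] by simp
        show "cyc_perm (bar_seq x) p (bar_len x n) i j (t i) \<le> cyc_perm x Q n i j (s i)"
        proof (cases "i = j")
          case True
          then show ?thesis using e T_val[OF ti(1)] ti(3) Qi i unfolding cyc_perm_def by simp
        next
          case False
          have "s i \<le> n i" using ss i unfolding is_solution_def by simp
          then have "cyc_perm x Q n i j (T (t i)) \<le> cyc_perm x Q n i j (s i)"
            using S_mono[OF yS i j False] ti(2) by simp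
          then show ?thesis using e Qi i unfolding cyc_perm_def by simp
        qed
      qed
      then show "int (r j) + (\<Sum>i\<in>{1..d}. cyc_perm (bar_seq x) p (bar_len x n) i j (t i)) \<le> 0"
        using ss j unfolding is_solution_def by force
    qed
    have tK: "\<forall>i\<in>{1..d}. t i \<le> bar_len x n i" using t by simp
    obtain u where u: "is_solution d r (cyc_perm (bar_seq x) p (bar_len x n)) (bar_len x n) u"
      "\<forall>i\<in>{1..d}. u i \<le> t i" using greedy[OF zS tK tv] by blast
    have "bar_len x n i0 \<le> u i0" using good u(1) i0 unfolding is_smallest_solution_def by blast
    then have ti0: "t i0 = bar_len x n i0" using u(2) tK i0 by force
    interpret walk_shift "x i0 i0" "n i0" "p i0" by (rule WS[OF i0]) (use pK i0 in simp)
    show "n i0 \<le> s i0" using t i0 ti0 Kdef[OF i0] T_K by force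
  qed
qed


lemma D2:
  assumes c: "c \<in> Pi\<^sub>E {1..d} (\<lambda>i. {0..<n i})"
    and good: "is_smallest_solution d r (cyc_perm x c n) n n"
  shows "\<exists>p \<in> Pi\<^sub>E {1..d} (\<lambda>i. {0..<bar_len x n i}).
    is_smallest_solution d r (cyc_perm (bar_seq x) p (bar_len x n)) (bar_len x n) (bar_len x n)
    \<and> c = restrict (\<lambda>i. tau x i (p i)) {1..d}"
proof -
  have qn: "\<forall>i\<in>{1..d}. c i < n i" using c by auto
  have qle: "\<forall>i\<in>{1..d}. c i \<le> n i" using qn less_imp_le by blast
  have yS: "in_S d (cyc_perm x c n) n" using cyc_S[OF S qle] .
  have hit: "x i i h0 > x i i (c i)" if i: "i \<in> {1..d}" and h0: "h0 < c i" for i h0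
  proof -
    define h where "h = n i - c i + h0"
    have qin: "c i < n i" using qn i by blast
    then have hn: "h < n i" unfolding h_def using h0 by simp
    have "cyc_perm x c n i i h > cyc_perm x c n i i (n i)" using smallest_diag[OF yS good i hn] .
    moreover have "cyc_perm x c n i i (n i) = x i i (n i)"
      unfolding cyc_perm_def using cyc_end S i qle unfolding in_S_def by blast
    moreover have "cyc_perm x c n i i h = x i i h0 + x i i (n i) - x i i (c i)"
    proof (cases "h0 = 0")
      case True
      have x0: "x i i 0 = 0" using S i unfolding in_S_def by blast
      then show ?thesis unfolding cyc_perm_def cyc_def h_def using qin True by simp
    next
      case False
      have e: "n i - c i + h0 \<le> n i" "\<not> n i - c i + h0 \<le> n i - c i" "n i - c i + h0 - (n i - c i) = h0"
        using qin h0 False by auto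
      show ?thesis unfolding cyc_perm_def cyc_def h_def using e by simp
    qed
    ultimately show ?thesis by simp
  qed
  define p where "p = restrict (\<lambda>i. nat (- x i i (c i))) {1..d}"
  have pi: "p i < bar_len x n i \<and> walk.tw (x i i) (p i) = c i" if i: "i \<in> {1..d}" for i
  proof -
    interpret walk "x i i" "n i" by (rule W[OF i])
    have le0: "x i i (c i) \<le> 0"
    proof (cases "c i = 0")
      case True then show ?thesis using f0 by simp
    next
      case False then show ?thesis using hit[OF i, of 0] f0 by simp
    qed
    then have fq: "x i i (c i) = - int (p i)" unfolding p_def using i by simp
    have "c i < n i" using qn i by blast
    then have "x i i (c i) > x i i (n i)" using fmin by simp
    then have "p i < K" using fq fN by simp
    moreover have "tw (p i) = c i" using tw_hit[OF fq] hit[OF i] by simp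
    ultimately show ?thesis using Kdef[OF i] by simp
  qed
  have pP: "p \<in> Pi\<^sub>E {1..d} (\<lambda>i. {0..<bar_len x n i})"
  proof -
    have "\<forall>i\<in>{1..d}. p i \<in> {0..<bar_len x n i}" using pi by simp
    moreover have "p \<in> extensional {1..d}" unfolding p_def by simp
    ultimately show ?thesis by (simp add: PiE_iff)
  qed
  have pK: "\<forall>i\<in>{1..d}. p i \<le> bar_len x n i" using pi by (simp add: order_less_imp_le)
  have qeq: "c = restrict (\<lambda>i. tau x i (p i)) {1..d}"
  proof (rule ext)
    fix i show "c i = restrict (\<lambda>i. tau x i (p i)) {1..d} i"
    proof (cases "i \<in> {1..d}")
      case True
      then have "tau x i (p i) = c i" using pi[OF True] taudef[OF True] by simp
      then show ?thesis using True by simp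
    next
      case False
      have "restrict (\<lambda>i. tau x i (p i)) {1..d} i = undefined" using False unfolding restrict_def by auto
      then show ?thesis using PiE_arb[OF c False] by simp
    qed
  qed
  have zsol: "is_solution d r (cyc_perm (bar_seq x) p (bar_len x n)) (bar_len x n) (bar_len x n)"
    using cyc_solution[OF xb_S pK xb_sol] .
  have "is_smallest_solution d r (cyc_perm (bar_seq x) p (bar_len x n)) (bar_len x n) (bar_len x n)"
    unfolding is_smallest_solution_def
  proof (intro conjI zsol allI impI ballI)
    fix u i0 assume us: "is_solution d r (cyc_perm (bar_seq x) p (bar_len x n)) (bar_len x n) u"
      and i0: "i0 \<in> {1..d}"
    define s where "s i = walk_shift.T (x i i) (n i) (p i) (u i)" for i
    have key: "s i \<le> n i \<and> (\<forall>j. cyc_perm x c n i j (s i) = cyc_perm (bar_seq x) p (bar_len x n) i j (u i))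
       \<and> (u i < bar_len x n i \<longrightarrow> s i < n i)" if i: "i \<in> {1..d}" for i
    proof -
      interpret walk_shift "x i i" "n i" "p i" by (rule WS[OF i]) (use pi i in simp)
      have "u i \<le> bar_len x n i" using us i unfolding is_solution_def by blast
      then have uK: "u i \<le> K" using Kdef[OF i] by simp
      have qq: "walk_shift.q (x i i) (p i) = c i" using q_def pi i by simp
      have "cyc_perm x c n i j (s i) = cyc_perm (bar_seq x) p (bar_len x n) i j (u i)" for j
        unfolding cyc_perm_def s_def using cyc_T[OF uK, of "x i j"] xb_eq[OF i] Kdef[OF i] qq by simp
      moreover have "s i \<le> n i" unfolding s_def using T_le[OF uK] .
      moreover have "u i < bar_len x n i \<longrightarrow> s i < n i" unfolding s_def using T_lt Kdef[OF i] by simp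
      ultimately show ?thesis by blast
    qed
    have ssol: "is_solution d r (cyc_perm x c n) n s"
      unfolding is_solution_def
    proof (intro conjI ballI)
      fix i assume "i \<in> {1..d}" then show "s i \<le> n i" using key by simp
    next
      fix j assume j: "j \<in> {1..d}"
      have "(\<Sum>i\<in>{1..d}. cyc_perm x c n i j (s i)) = (\<Sum>i\<in>{1..d}. cyc_perm (bar_seq x) p (bar_len x n) i j (u i))"
        using key by (intro sum.cong) auto
      then show "int (r j) + (\<Sum>i\<in>{1..d}. cyc_perm x c n i j (s i)) = 0"
        using us j unfolding is_solution_def by simp
    qed
    have "n i0 \<le> s i0" using good ssol i0 unfolding is_smallest_solution_def by blast
    then show "bar_len x n i0 \<le> u i0" using key[OF i0] by (meson leD not_le_imp_less)
  qed
  then have "is_smallest_solution d r (cyc_perm (bar_seq x) p (bar_len x n)) (bar_len x n) (bar_len x n)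
    \<and> c = restrict (\<lambda>i. tau x i (p i)) {1..d}" using qeq by simp
  then show ?thesis using pP by (rule bexI)
qed


lemma tau_inj:
  assumes i: "i \<in> {1..d}" and a: "a < bar_len x n i" and b: "b < bar_len x n i"
    and e: "tau x i a = tau x i b"
  shows "a = b"
proof -
  interpret walk "x i i" "n i" by (rule W[OF i])
  have aK: "a \<le> K" and bK: "b \<le> K" using a b Kdef[OF i] by auto
  have e': "tw a = tw b" using e taudef[OF i] by simp
  show ?thesis
  proof (rule ccontr)
    assume "a \<noteq> b"
    then consider "a < b" | "b < a" by linarith
    then show False
    proof cases
      case 1 then show False using tw_mono[OF 1 bK] e' by simp
    next
      case 2 then show False using tw_mono[OF 2 aK] e' by simp
    qed
  qed
qed

lemma main: "num_good d r x n = num_good d r (bar_seq x) (bar_len x n)"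
proof -
  define Gx where "Gx = {q \<in> Pi\<^sub>E {1..d} (\<lambda>i. {0..<n i}). is_smallest_solution d r (cyc_perm x q n) n n}"
  define Gb where "Gb = {p \<in> Pi\<^sub>E {1..d} (\<lambda>i. {0..<bar_len x n i}).
     is_smallest_solution d r (cyc_perm (bar_seq x) p (bar_len x n)) (bar_len x n) (bar_len x n)}"
  define Qf where "Qf = (\<lambda>p. restrict (\<lambda>i. tau x i (p i)) {1..d})"
  have "Gx \<subseteq> Qf ` Gb"
  proof
    fix q assume "q \<in> Gx"
    then have q: "q \<in> Pi\<^sub>E {1..d} (\<lambda>i. {0..<n i})" "is_smallest_solution d r (cyc_perm x q n) n n"
      unfolding Gx_def by auto
    obtain p where "p \<in> Pi\<^sub>E {1..d} (\<lambda>i. {0..<bar_len x n i})"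
      "is_smallest_solution d r (cyc_perm (bar_seq x) p (bar_len x n)) (bar_len x n) (bar_len x n)"
      "q = Qf p" using D2[OF q] unfolding Qf_def by blast
    then show "q \<in> Qf ` Gb" unfolding Gb_def by blast
  qed
  moreover have "Qf ` Gb \<subseteq> Gx"
  proof
    fix q assume "q \<in> Qf ` Gb"
    then obtain p where p: "p \<in> Pi\<^sub>E {1..d} (\<lambda>i. {0..<bar_len x n i})"
      "is_smallest_solution d r (cyc_perm (bar_seq x) p (bar_len x n)) (bar_len x n) (bar_len x n)"
      and qp: "q = Qf p" unfolding Gb_def by blast
    have "\<forall>i\<in>{1..d}. Qf p i \<in> {0..<n i}"
    proof
      fix i assume i: "i \<in> {1..d}"
      then have "p i < bar_len x n i" using p(1) by auto
      then show "Qf p i \<in> {0..<n i}" unfolding Qf_def using qi(2)[OF i] i by simp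
    qed
    moreover have "Qf p \<in> extensional {1..d}" unfolding Qf_def by simp
    ultimately have "Qf p \<in> Pi\<^sub>E {1..d} (\<lambda>i. {0..<n i})" by (simp add: PiE_iff)
    then show "q \<in> Gx" unfolding Gx_def qp using D1[OF p] unfolding Qf_def by simp
  qed
  ultimately have GE: "Gx = Qf ` Gb" by blast
  have inj: "inj_on Qf Gb"
  proof (rule inj_onI)
    fix p p' assume p: "p \<in> Gb" and p': "p' \<in> Gb" and e: "Qf p = Qf p'"
    have pP: "p \<in> Pi\<^sub>E {1..d} (\<lambda>i. {0..<bar_len x n i})" using p unfolding Gb_def by simp
    have pP': "p' \<in> Pi\<^sub>E {1..d} (\<lambda>i. {0..<bar_len x n i})" using p' unfolding Gb_def by simp
    show "p = p'"
    proof (rule ext)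
      fix i show "p i = p' i"
      proof (cases "i \<in> {1..d}")
        case True
        have "Qf p i = Qf p' i" using e by simp
        then have "tau x i (p i) = tau x i (p' i)" unfolding Qf_def using True by simp
        moreover have "p i < bar_len x n i" "p' i < bar_len x n i" using pP pP' True by auto
        ultimately show ?thesis using tau_inj[OF True] by blast
      next
        case False
        then show ?thesis using PiE_arb[OF pP False] PiE_arb[OF pP' False] by simp
      qed
    qed
  qed
  have "card Gx = card Gb" using GE card_image[OF inj] by simp
  then show ?thesis unfolding num_good_def Gx_def Gb_def .
qed

end


theorem lemma4p7:
  fixes d :: nat and r :: "nat \<Rightarrow> nat" and x :: "nat \<Rightarrow> nat \<Rightarrow> nat \<Rightarrow> int" and n :: "nat \<Rightarrow> nat"
  assumes "d \<ge> 2"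
    and "\<exists>j\<in>{1..d}. r j \<noteq> 0"
    and "in_S_r d r x n"
  shows "num_good d r x n = num_good d r (bar_seq x) (bar_len x n)"
proof -
  interpret lctx d r x n by (rule lctx.intro) (rule assms(3))
  show ?thesis by (rule main)
qed

end
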